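(* In the setting of the context, assume (A2), (A2') and (A3). Then for every $j\in\{1,\dots,p\}$, $$\big|\,\|R\|_{\mathcal{G}_j,2}-\|\alpha\|_{\mathcal{G}_j,2}\big|^2\le 4M^2v_n\,r(\mathcal{G}_j)+2(1+\nu)\,\|P_{V_{\mathcal{G}_j}}W\|_2^2.$$
   Context: Model $Y=\tilde X\alpha+W$ with $\tilde X\in\mathbb{R}^{n\times k}$, $\alpha\in\mathbb{R}^k$, $W\in\mathbb{R}^n$ a noise vector with i.i.d. $\mathcal{N}(0,\sigma^2)$ entries. $\mathcal{G}_1,\dots,\mathcal{G}_p$ is a partition of $\{1,\dots,k\}$, $t_j=\#\mathcal{G}_j$, $t^*=\max_j t_j$; each index $\ell$ is written $\ell=(j,t)$ with $j$ its group and $t\in\{1,\dots,t_j\}$ its rank inside $\mathcal{G}_j$. $R_\ell=\sum_{i=1}^n Y_i\tilde X_{i\ell}$. Norms: $\|u\|_{\mathcal{I},1}=\sum_{\ell\in\mathcal{I}}|u_\ell|$, $\|u\|_{\mathcal{I},2}^2=\sum_{\ell\in\mathcal{I}}u_\ell^2$. $\Gamma=\tilde X^t\tilde X$; $V_{\mathcal{I}}$ is the span of the columns of $\tilde X$ indexed by $\mathcal{I}$ and $P_{V_{\mathcal{I}}}$ the orthogonal projection onto it. $\gamma_{BT}=\sup\{|\Gamma_{(j,t)(j',t')}|: t\neq t'\}$, $\gamma_{BG}=\sup\{|\Gamma_{(j,t)(j',t)}|: j\ne j'\}$; $r(\mathcal{I})=\#(\mathcal{I})\gamma_{BT}^2+\#\{j:\exists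 t,(j,t)\in\mathcal{I}\}\gamma_{BG}^2$; $\tau^*=t^*\gamma_{BT}+\gamma_{BG}$. Assumptions: (A2) $\Gamma_{\ell\ell}=1$ for all $\ell$; (A2') $\tau^*\le\nu$ for a fixed $\nu\in(0,1)$; (A3) there exist $q\in(0,1]$, $M>0$ and $v_n>0$ with $\sum_{j=1}^p\|\alpha\|_{\mathcal{G}_j,1}^q\le M^q v_n^{q/2}$. *)

theory Defs
  imports "HOL-Analysis.Analysis"
begin

text \<open>Columns of the design matrix are indexed by a finite type 'k (the k columns),
  observations by a finite type 'n (so vectors live in real^'n).
  X l is the l-th column of the matrix tilde X.\<close>

definition Gram :: "('k \<Rightarrow> real^'n) \<Rightarrow> 'k \<Rightarrow> 'k \<Rightarrow> real" where
  "Gram X l l' = X l \<bullet> X l'"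

definition response :: "('k::finite \<Rightarrow> real^'n) \<Rightarrow> ('k \<Rightarrow> real) \<Rightarrow> real^'n \<Rightarrow> real^'n" where
  "response X \<alpha> W = (\<Sum>l\<in>UNIV. \<alpha> l *\<^sub>R X l) + W"

definition Rstat :: "('k::finite \<Rightarrow> real^'n) \<Rightarrow> ('k \<Rightarrow> real) \<Rightarrow> real^'n \<Rightarrow> 'k \<Rightarrow> real" where
  "Rstat X \<alpha> W l = response X \<alpha> W \<bullet> X l"

definition norm1_on :: "'k set \<Rightarrow> ('k \<Rightarrow> real) \<Rightarrow> real" where
  "norm1_on I u = (\<Sum>l\<in>I. \<bar>u l\<bar>)"

definition norm2_on :: "'k set \<Rightarrow> ('k \<Rightarrow> real) \<Rightarrow> real" where
  "norm2_on I u = sqrt (\<Sum>l\<in>I. (u l)\<^sup>2)"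

text \<open>Groups G 0, ..., G (p-1) form a partition of the column index set (nonempty blocks);
  rk l is the rank t of l inside its group, a bijection of G j onto {1..t_j}.\<close>
definition is_group_partition :: "nat \<Rightarrow> (nat \<Rightarrow> 'k set) \<Rightarrow> bool" where
  "is_group_partition p G \<longleftrightarrow>
     (\<forall>j<p. G j \<noteq> {}) \<and> (\<forall>j<p. \<forall>j'<p. j \<noteq> j' \<longrightarrow> G j \<inter> G j' = {}) \<and>
     (\<Union>j<p. G j) = UNIV"

definition grp :: "nat \<Rightarrow> (nat \<Rightarrow> 'k set) \<Rightarrow> 'k \<Rightarrow> nat" where
  "grp p G l = (THE j. j < p \<and> l \<in> G j)"

definition is_rank :: "nat \<Rightarrow> (nat \<Rightarrow> 'k set) \<Rightarrow> ('k \<Rightarrow> nat) \<Rightarrow> bool" where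
  "is_rank p G rk \<longleftrightarrow> (\<forall>j<p. bij_betw rk (G j) {1..card (G j)})"

definition tstar :: "nat \<Rightarrow> (nat \<Rightarrow> 'k set) \<Rightarrow> nat" where
  "tstar p G = Max (insert 0 ((\<lambda>j. card (G j)) ` {..<p}))"

text \<open>Suprema over finite sets of nonnegative numbers; the supremum of the empty set is taken as 0.\<close>
definition gamma_BT :: "('k::finite \<Rightarrow> real^'n) \<Rightarrow> ('k \<Rightarrow> nat) \<Rightarrow> real" where
  "gamma_BT X rk = Max (insert 0 {\<bar>Gram X l l'\<bar> | l l'. rk l \<noteq> rk l'})"

definition gamma_BG :: "('k::finite \<Rightarrow> real^'n) \<Rightarrow> nat \<Rightarrow> (nat \<Rightarrow> 'k set) \<Rightarrow> ('k \<Rightarrow> nat) \<Rightarrow> real" where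
  "gamma_BG X p G rk = Max (insert 0 {\<bar>Gram X l l'\<bar> | l l'. rk l = rk l' \<and> grp p G l \<noteq> grp p G l'})"

definition rfun :: "('k::finite \<Rightarrow> real^'n) \<Rightarrow> nat \<Rightarrow> (nat \<Rightarrow> 'k set) \<Rightarrow> ('k \<Rightarrow> nat) \<Rightarrow> 'k set \<Rightarrow> real" where
  "rfun X p G rk I = real (card I) * (gamma_BT X rk)\<^sup>2
      + real (card {j. \<exists>l\<in>I. grp p G l = j}) * (gamma_BG X p G rk)\<^sup>2"

definition tau_star :: "('k::finite \<Rightarrow> real^'n) \<Rightarrow> nat \<Rightarrow> (nat \<Rightarrow> 'k set) \<Rightarrow> ('k \<Rightarrow> nat) \<Rightarrow> real" where
  "tau_star X p G rk = real (tstar p G) * gamma_BT X rk + gamma_BG X p G rk"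

definition orth_proj :: "(real^'n) set \<Rightarrow> real^'n \<Rightarrow> real^'n" where
  "orth_proj V w = (THE q. q \<in> V \<and> (\<forall>v\<in>V. (w - q) \<bullet> v = 0))"

end

theory Submission imports Defs begin

lemma norm2_L2: "norm2_on I u = L2_set u I"
  by (simp add: norm2_on_def L2_set_def)

lemma proj_props:
  fixes S :: "(real^'n) set"
  shows "orth_proj (span S) w \<in> span S \<and> (\<forall>v\<in>span S. (w - orth_proj (span S) w) \<bullet> v = 0)"
proof -
  obtain y z where y: "y \<in> span S" and z: "\<And>v. v \<in> span S \<Longrightarrow> orthogonal z v" and w: "w = y + z"
    using orthogonal_subspace_decomp_exists by blast
  have P: "y \<in> span S \<and> (\<forall>v\<in>span S. (w - y) \<bullet> v = 0)"
    using y z w by (simp add: orthogonal_def)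
  have U: "q = y" if "q \<in> span S \<and> (\<forall>v\<in>span S. (w - q) \<bullet> v = 0)" for q
  proof -
    have d: "y - q \<in> span S" using y that by (simp add: span_diff)
    have "(w - q) \<bullet> (y - q) = 0" "(w - y) \<bullet> (y - q) = 0" using that d P by auto
    then have "(y - q) \<bullet> (y - q) = 0"
      by (metis (no_types, lifting) diff_add_cancel diff_diff_eq2 inner_diff_left inner_commute right_minus_eq)
    then show ?thesis by simp
  qed
  have "orth_proj (span S) w = y"
    unfolding orth_proj_def using P U by (rule the_equality)
  then show ?thesis using P by simp
qed

lemma grp_eq:
  assumes part: "is_group_partition p G" and "j < p" "l \<in> G j"
  shows "grp p G l = j"
  unfolding grp_def
proof (rule the_equality)
  show "j < p \<and> l \<in> G j" using assms by simp
  fix j' assume "j' < p \<and> l \<in> G j'"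
  then show "j' = j" using part assms unfolding is_group_partition_def by blast
qed

lemma fin_pairs: "finite {f l l' | l l'. P l l'}" for f :: "'k::finite \<Rightarrow> 'k \<Rightarrow> real"
proof -
  have "{f l l' | l l'. P l l'} \<subseteq> (\<lambda>(l,l'). f l l') ` UNIV" by auto
  then show ?thesis by (rule finite_subset) simp
qed

lemma gBT_nonneg: "gamma_BT X rk \<ge> 0"
  unfolding gamma_BT_def by (rule Max_ge) (auto simp: fin_pairs)

lemma gBG_nonneg: "gamma_BG X p G rk \<ge> 0"
  unfolding gamma_BG_def by (rule Max_ge) (auto simp: fin_pairs)

lemma gBT_le: "rk l \<noteq> rk l' \<Longrightarrow> \<bar>Gram X l l'\<bar> \<le> gamma_BT X rk"
  unfolding gamma_BT_def by (rule Max_ge) (auto simp: fin_pairs)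

lemma gBG_le: "rk l = rk l' \<Longrightarrow> grp p G l \<noteq> grp p G l' \<Longrightarrow> \<bar>Gram X l l'\<bar> \<le> gamma_BG X p G rk"
  unfolding gamma_BG_def by (rule Max_ge) (auto simp: fin_pairs)


lemma l1_bound:
  fixes a :: "nat \<Rightarrow> real"
  assumes fin: "finite J" and a: "\<And>j. j \<in> J \<Longrightarrow> a j \<ge> 0" and q: "0 < q" "q \<le> 1"
    and Mv: "M > 0" "v > 0"
    and S: "(\<Sum>j\<in>J. a j powr q) \<le> M powr q * v powr (q / 2)"
  shows "(\<Sum>j\<in>J. a j)\<^sup>2 \<le> M\<^sup>2 * v"
proof -
  define L where "L = (\<Sum>j\<in>J. a j)"
  have L0: "L \<ge> 0" unfolding L_def using a by (simp add: sum_nonneg)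
  have sv: "v powr (q / 2) = sqrt v powr q"
    using Mv by (simp add: powr_powr flip: powr_half_sqrt)
  have key: "L \<le> M * sqrt v"
  proof (cases "L = 0")
    case True then show ?thesis using Mv by simp
  next
    case False
    then have Lp: "L > 0" using L0 by simp
    have "1 = (\<Sum>j\<in>J. a j / L)" using Lp unfolding sum_divide_distrib[symmetric] L_def by simp
    also have "\<dots> \<le> (\<Sum>j\<in>J. (a j / L) powr q)"
    proof (rule sum_mono)
      fix j assume j: "j \<in> J"
      have "a j \<le> L" unfolding L_def using a j fin by (intro member_le_sum) auto
      then have "a j / L \<le> 1" "a j / L \<ge> 0" using Lp a j by auto
      then have "(a j / L) powr 1 \<le> (a j / L) powr q" using q by (intro powr_mono') auto
      then show "a j / L \<le> (a j / L) powr q" using \<open>a j / L \<ge> 0\<close> a j Lp by simp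
    qed
    also have "\<dots> = (\<Sum>j\<in>J. a j powr q) / L powr q"
      using a Lp by (simp add: powr_divide sum_divide_distrib)
    finally have "L powr q \<le> (\<Sum>j\<in>J. a j powr q)" using Lp by (simp add: field_simps)
    also have "\<dots> \<le> (M * sqrt v) powr q" using S sv Mv by (simp add: powr_mult)
    finally have le: "L powr q \<le> (M * sqrt v) powr q" .
    show ?thesis
    proof (rule ccontr)
      assume "\<not> L \<le> M * sqrt v"
      then have "(M * sqrt v) powr q < L powr q" using q Mv by (intro powr_less_mono2) auto
      then show False using le by simp
    qed
  qed
  have "L\<^sup>2 \<le> (M * sqrt v)\<^sup>2" using key L0 by (intro power_mono) auto
  then show ?thesis using Mv unfolding L_def by (simp add: power_mult_distrib)
qed


lemma quad_bound:
  fixes c :: "'k \<Rightarrow> real" and Gm :: "'k \<Rightarrow> 'k \<Rightarrow> real"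
  assumes fin: "finite I" and diag: "\<And>l. Gm l l = 1"
    and off: "\<And>l l'. l \<in> I \<Longrightarrow> l' \<in> I \<Longrightarrow> l \<noteq> l' \<Longrightarrow> \<bar>Gm l l'\<bar> \<le> g" and g: "g \<ge> 0"
  shows "(\<Sum>l\<in>I. \<Sum>l'\<in>I. c l * c l' * Gm l l') \<le> (1 + (real (card I) - 1) * g) * (\<Sum>l\<in>I. (c l)\<^sup>2)"
proof -
  let ?S = "\<Sum>l\<in>I. (c l)\<^sup>2"
  have trm: "c l * c l' * Gm l l' \<le> g * ((c l)\<^sup>2 + (c l')\<^sup>2) / 2 + (if l = l' then (1 - g) * (c l)\<^sup>2 else 0)"
    if "l \<in> I" "l' \<in> I" for l l'
  proof (cases "l = l'")
    case True then show ?thesis using diag by (simp add: power2_eq_square algebra_simps)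
  next
    case False
    have "c l * c l' * Gm l l' \<le> \<bar>c l * c l'\<bar> * \<bar>Gm l l'\<bar>"
      by (metis abs_ge_self abs_mult)
    also have "\<dots> \<le> \<bar>c l * c l'\<bar> * g" using off[OF that False] by (intro mult_left_mono) auto
    also have "\<bar>c l * c l'\<bar> \<le> ((c l)\<^sup>2 + (c l')\<^sup>2) / 2"
    proof -
      have "0 \<le> (\<bar>c l\<bar> - \<bar>c l'\<bar>)\<^sup>2" by simp
      then have "2 * (\<bar>c l\<bar> * \<bar>c l'\<bar>) \<le> \<bar>c l\<bar>\<^sup>2 + \<bar>c l'\<bar>\<^sup>2"
        by (simp add: power2_diff)
      then show ?thesis by (simp add: abs_mult)
    qed
    then have "\<bar>c l * c l'\<bar> * g \<le> ((c l)\<^sup>2 + (c l')\<^sup>2) / 2 * g" using g by (intro mult_right_mono)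
    finally show ?thesis using False by (simp add: mult.commute)
  qed
  have "(\<Sum>l\<in>I. \<Sum>l'\<in>I. c l * c l' * Gm l l') \<le>
      (\<Sum>l\<in>I. \<Sum>l'\<in>I. g * ((c l)\<^sup>2 + (c l')\<^sup>2) / 2 + (if l = l' then (1 - g) * (c l)\<^sup>2 else 0))"
    using trm by (intro sum_mono) auto
  also have "\<dots> = (\<Sum>l\<in>I. \<Sum>l'\<in>I. g * ((c l)\<^sup>2 + (c l')\<^sup>2) / 2)
      + (\<Sum>l\<in>I. \<Sum>l'\<in>I. (if l = l' then (1 - g) * (c l)\<^sup>2 else 0))"
    by (simp add: sum.distrib)
  also have "(\<Sum>l\<in>I. \<Sum>l'\<in>I. (if l = l' then (1 - g) * (c l)\<^sup>2 else 0)) = (1 - g) * ?S"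
    using fin by (simp add: sum_distrib_left)
  also have "(\<Sum>l\<in>I. \<Sum>l'\<in>I. g * ((c l)\<^sup>2 + (c l')\<^sup>2) / 2)
      = (\<Sum>l\<in>I. \<Sum>l'\<in>I. g / 2 * (c l)\<^sup>2) + (\<Sum>l\<in>I. \<Sum>l'\<in>I. g / 2 * (c l')\<^sup>2)"
    unfolding sum.distrib[symmetric] by (intro sum.cong refl) (simp add: algebra_simps add_divide_distrib)
  also have "(\<Sum>l\<in>I. \<Sum>l'\<in>I. g / 2 * (c l)\<^sup>2) = g / 2 * real (card I) * ?S"
    by (simp add: sum_distrib_left sum_distrib_right algebra_simps)
  also have "(\<Sum>l\<in>I. \<Sum>l'\<in>I. g / 2 * (c l')\<^sup>2) = g / 2 * real (card I) * ?S"
    by (simp add: sum_distrib_left sum_distrib_right algebra_simps)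
  finally show ?thesis by (simp add: algebra_simps)
qed


lemma noise_bound:
  fixes X :: "'k::finite \<Rightarrow> real^'n" and W :: "real^'n"
  assumes A2: "\<forall>l. Gram X l l = 1"
    and off: "\<And>l l'. l \<in> I \<Longrightarrow> l' \<in> I \<Longrightarrow> l \<noteq> l' \<Longrightarrow> \<bar>Gram X l l'\<bar> \<le> g" and g: "g \<ge> 0"
    and gn: "(real (card I) - 1) * g \<le> \<nu>" and nu0: "\<nu> \<ge> 0"
  shows "(\<Sum>l\<in>I. (W \<bullet> X l)\<^sup>2) \<le> (1 + \<nu>) * (norm (orth_proj (span (X ` I)) W))\<^sup>2"
proof -
  define u where "u = orth_proj (span (X ` I)) W"
  have pu: "\<forall>v\<in>span (X ` I). (W - u) \<bullet> v = 0" using proj_props unfolding u_def by blast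
  define c where "c l = W \<bullet> X l" for l
  have cu: "c l = u \<bullet> X l" if "l \<in> I" for l
  proof -
    have "X l \<in> span (X ` I)" using that by (simp add: span_base)
    then have "(W - u) \<bullet> X l = 0" using pu by blast
    then show ?thesis unfolding c_def by (simp add: inner_diff_left)
  qed
  define y where "y = (\<Sum>l\<in>I. c l *\<^sub>R X l)"
  define S where "S = (\<Sum>l\<in>I. (c l)\<^sup>2)"
  have S0: "S \<ge> 0" unfolding S_def by (simp add: sum_nonneg)
  have "S = (\<Sum>l\<in>I. c l * (u \<bullet> X l))" unfolding S_def
    by (intro sum.cong refl) (simp add: cu power2_eq_square)
  also have "\<dots> = u \<bullet> y" unfolding y_def by (simp add: inner_sum_right)
  also have "\<dots> \<le> norm u * norm y" by (rule Cauchy_Schwarz_ineq2[THEN order_trans[OF abs_ge_self]])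
  finally have S1: "S \<le> norm u * norm y" .
  have "(norm y)\<^sup>2 = y \<bullet> y" by (simp add: power2_norm_eq_inner)
  also have "\<dots> = (\<Sum>l\<in>I. \<Sum>l'\<in>I. c l * c l' * Gram X l l')"
    unfolding y_def Gram_def by (simp add: inner_sum_left inner_sum_right sum_distrib_left algebra_simps inner_commute)
  also have "\<dots> \<le> (1 + (real (card I) - 1) * g) * S"
    unfolding S_def by (rule quad_bound) (use A2 off g in auto)
  also have "\<dots> \<le> (1 + \<nu>) * S" using gn S0 by (intro mult_right_mono) auto
  finally have y2: "(norm y)\<^sup>2 \<le> (1 + \<nu>) * S" .
  have "S\<^sup>2 \<le> (norm u * norm y)\<^sup>2" using S1 S0 by (intro power_mono) auto
  also have "\<dots> = (norm u)\<^sup>2 * (norm y)\<^sup>2" by (simp add: power_mult_distrib)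
  also have "\<dots> \<le> (norm u)\<^sup>2 * ((1 + \<nu>) * S)" using y2 by (intro mult_left_mono) auto
  finally have "S * S \<le> ((1 + \<nu>) * (norm u)\<^sup>2) * S" by (simp add: power2_eq_square algebra_simps)
  then have "S \<le> (1 + \<nu>) * (norm u)\<^sup>2"
    using S0 nu0 by (cases "S = 0") (auto simp: mult_le_cancel_right)
  then show ?thesis unfolding S_def c_def u_def .
qed


lemma Rstat_split:
  fixes X :: "'k::finite \<Rightarrow> real^'n"
  assumes A2: "\<forall>l. Gram X l l = 1"
  shows "Rstat X \<alpha> W l = \<alpha> l
     + (\<Sum>l'\<in>UNIV. if rk l' \<noteq> rk l then \<alpha> l' * Gram X l l' else 0)
     + (\<Sum>l'\<in>UNIV. if rk l' = rk l \<and> l' \<noteq> l then \<alpha> l' * Gram X l l' else 0)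
     + W \<bullet> X l"
proof -
  have pt: "\<alpha> l' * Gram X l l' = (if l' = l then \<alpha> l else 0)
      + (if rk l' \<noteq> rk l then \<alpha> l' * Gram X l l' else 0)
      + (if rk l' = rk l \<and> l' \<noteq> l then \<alpha> l' * Gram X l l' else 0)" for l'
    using A2 by auto
  have "Rstat X \<alpha> W l = (\<Sum>l'\<in>UNIV. \<alpha> l' * Gram X l l') + W \<bullet> X l"
  proof -
    have "Rstat X \<alpha> W l = (\<Sum>l'\<in>UNIV. \<alpha> l' * (X l' \<bullet> X l)) + W \<bullet> X l"
      unfolding Rstat_def response_def by (simp add: inner_add_left inner_sum_left)
    also have "(\<Sum>l'\<in>UNIV. \<alpha> l' * (X l' \<bullet> X l)) = (\<Sum>l'\<in>UNIV. \<alpha> l' * Gram X l l')"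
      unfolding Gram_def by (intro sum.cong refl) (simp add: inner_commute)
    finally show ?thesis .
  qed
  also have "(\<Sum>l'\<in>UNIV. \<alpha> l' * Gram X l l') = \<alpha> l
     + (\<Sum>l'\<in>UNIV. if rk l' \<noteq> rk l then \<alpha> l' * Gram X l l' else 0)
     + (\<Sum>l'\<in>UNIV. if rk l' = rk l \<and> l' \<noteq> l then \<alpha> l' * Gram X l l' else 0)"
    by (subst pt) (simp only: sum.distrib, simp)
  finally show ?thesis .
qed


theorem proposition1:
  fixes X :: "'k::finite \<Rightarrow> real^'n"
    and \<alpha> :: "'k \<Rightarrow> real"
    and W :: "real^'n"
    and p :: nat and G :: "nat \<Rightarrow> 'k set" and rk :: "'k \<Rightarrow> nat"
    and \<nu> q M v :: real
  assumes part: "is_group_partition p G"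
    and rank: "is_rank p G rk"
    and A2: "\<forall>l. Gram X l l = 1"
    and nu: "0 < \<nu>" "\<nu> < 1"
    and A2': "tau_star X p G rk \<le> \<nu>"
    and q: "0 < q" "q \<le> 1"
    and Mv: "M > 0" "v > 0"
    and A3: "(\<Sum>j<p. (norm1_on (G j) \<alpha>) powr q) \<le> M powr q * v powr (q / 2)"
    and j: "j < p"
  shows "\<bar>norm2_on (G j) (Rstat X \<alpha> W) - norm2_on (G j) \<alpha>\<bar>\<^sup>2
     \<le> 4 * M\<^sup>2 * v * rfun X p G rk (G j)
       + 2 * (1 + \<nu>) * (norm (orth_proj (span (X ` G j)) W))\<^sup>2"
proof -
  let ?I = "G j"
  let ?gT = "gamma_BT X rk" and ?gG = "gamma_BG X p G rk"
  have gT0: "?gT \<ge> 0" by (rule gBT_nonneg)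
  have gG0: "?gG \<ge> 0" by (rule gBG_nonneg)
  have injI: "inj_on rk ?I" using rank j unfolding is_rank_def bij_betw_def by blast
  have finI: "finite ?I" by simp
  have Ine: "?I \<noteq> {}" using part j unfolding is_group_partition_def by blast
  have inG: "\<exists>j'<p. l \<in> G j'" for l
    using part unfolding is_group_partition_def by blast
  define L where "L = (\<Sum>l\<in>UNIV. \<bar>\<alpha> l\<bar>)"
  have L0: "L \<ge> 0" unfolding L_def by (simp add: sum_nonneg)
  have "L = (\<Sum>j'<p. norm1_on (G j') \<alpha>)"
  proof -
    have U: "UNIV = (\<Union>j'\<in>{..<p}. G j')" using part unfolding is_group_partition_def by auto
    have "L = sum (\<lambda>l. \<bar>\<alpha> l\<bar>) (\<Union>j'\<in>{..<p}. G j')" unfolding L_def by (simp flip: U)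
    also have "\<dots> = (\<Sum>j'<p. sum (\<lambda>l. \<bar>\<alpha> l\<bar>) (G j'))"
      by (rule sum.UNION_disjoint) (use part in \<open>auto simp: is_group_partition_def\<close>)
    finally show ?thesis unfolding norm1_on_def .
  qed
  then have L2: "L\<^sup>2 \<le> M\<^sup>2 * v"
    using l1_bound[of "{..<p}" "\<lambda>j'. norm1_on (G j') \<alpha>" q M v] A3 q Mv
    by (simp add: norm1_on_def sum_nonneg)
  define a where "a l = (\<Sum>l'\<in>UNIV. if rk l' \<noteq> rk l then \<alpha> l' * Gram X l l' else 0)" for l
  define b where "b l = (\<Sum>l'\<in>UNIV. if rk l' = rk l \<and> l' \<noteq> l then \<alpha> l' * Gram X l l' else 0)" for l
  define N where "N l = W \<bullet> X l" for l
  have Rs: "Rstat X \<alpha> W l - \<alpha> l = a l + b l + N l" for l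
    using Rstat_split[OF A2, of \<alpha> W l rk] unfolding a_def b_def N_def by simp
  have a_le: "\<bar>a l\<bar> \<le> ?gT * L" for l
  proof -
    have "\<bar>a l\<bar> \<le> (\<Sum>l'\<in>UNIV. \<bar>if rk l' \<noteq> rk l then \<alpha> l' * Gram X l l' else 0\<bar>)"
      unfolding a_def by (rule sum_abs)
    also have "\<dots> \<le> (\<Sum>l'\<in>UNIV. ?gT * \<bar>\<alpha> l'\<bar>)"
    proof (rule sum_mono)
      fix l' show "\<bar>if rk l' \<noteq> rk l then \<alpha> l' * Gram X l l' else 0\<bar> \<le> ?gT * \<bar>\<alpha> l'\<bar>"
      proof (cases "rk l' \<noteq> rk l")
        case True
        then have "\<bar>Gram X l l'\<bar> \<le> ?gT" by (intro gBT_le) auto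
        then have "\<bar>\<alpha> l'\<bar> * \<bar>Gram X l l'\<bar> \<le> \<bar>\<alpha> l'\<bar> * ?gT" by (intro mult_left_mono) auto
        then show ?thesis using True by (simp add: abs_mult mult.commute)
      qed (use gT0 in simp)
    qed
    finally show ?thesis unfolding L_def by (simp add: sum_distrib_left)
  qed
  have A2s: "(L2_set a ?I)\<^sup>2 \<le> real (card ?I) * ?gT\<^sup>2 * L\<^sup>2"
  proof -
    have "(L2_set a ?I)\<^sup>2 = (\<Sum>l\<in>?I. (a l)\<^sup>2)" unfolding L2_set_def by (simp add: sum_nonneg)
    also have "\<dots> \<le> (\<Sum>l\<in>?I. (?gT * L)\<^sup>2)"
      by (intro sum_mono) (metis a_le abs_ge_zero abs_le_square_iff abs_mult abs_of_nonneg L0 gT0)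
    also have "\<dots> = real (card ?I) * ?gT\<^sup>2 * L\<^sup>2" by (simp add: power_mult_distrib)
    finally show ?thesis .
  qed
  have b_le: "\<bar>b l\<bar> \<le> (\<Sum>l'\<in>UNIV. if rk l' = rk l \<and> l' \<noteq> l then \<bar>\<alpha> l'\<bar> * ?gG else 0)" if l: "l \<in> ?I" for l
  proof -
    have "\<bar>b l\<bar> \<le> (\<Sum>l'\<in>UNIV. \<bar>if rk l' = rk l \<and> l' \<noteq> l then \<alpha> l' * Gram X l l' else 0\<bar>)"
      unfolding b_def by (rule sum_abs)
    also have "\<dots> \<le> (\<Sum>l'\<in>UNIV. if rk l' = rk l \<and> l' \<noteq> l then \<bar>\<alpha> l'\<bar> * ?gG else 0)"
    proof (rule sum_mono)
      fix l'
      show "\<bar>if rk l' = rk l \<and> l' \<noteq> l then \<alpha> l' * Gram X l l' else 0\<bar>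
          \<le> (if rk l' = rk l \<and> l' \<noteq> l then \<bar>\<alpha> l'\<bar> * ?gG else 0)"
      proof (cases "rk l' = rk l \<and> l' \<noteq> l")
        case True
        obtain j' where j': "j' < p" "l' \<in> G j'" using inG by blast
        have gl: "grp p G l = j" using grp_eq[OF part j l] .
        have gl': "grp p G l' = j'" using grp_eq[OF part j'] .
        have "j' \<noteq> j"
        proof
          assume "j' = j"
          then have "l' \<in> ?I" using j' by simp
          then show False using True injI l by (auto dest: inj_onD)
        qed
        then have "\<bar>Gram X l l'\<bar> \<le> ?gG" using True gl gl' by (intro gBG_le) auto
        then have "\<bar>\<alpha> l'\<bar> * \<bar>Gram X l l'\<bar> \<le> \<bar>\<alpha> l'\<bar> * ?gG" by (intro mult_left_mono) auto
        then show ?thesis using True by (simp add: abs_mult)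
      next
        case False
        show ?thesis by (simp only: if_not_P[OF False] abs_zero order_refl)
      qed
    qed
    finally show ?thesis .
  qed
  have B1: "(\<Sum>l\<in>?I. \<bar>b l\<bar>) \<le> ?gG * L"
  proof -
    have "(\<Sum>l\<in>?I. \<bar>b l\<bar>) \<le> (\<Sum>l\<in>?I. \<Sum>l'\<in>UNIV. if rk l' = rk l \<and> l' \<noteq> l then \<bar>\<alpha> l'\<bar> * ?gG else 0)"
      using b_le by (rule sum_mono)
    also have "\<dots> = (\<Sum>l'\<in>UNIV. \<Sum>l\<in>?I. if rk l' = rk l \<and> l' \<noteq> l then \<bar>\<alpha> l'\<bar> * ?gG else 0)"
      by (rule sum.swap)
    also have "\<dots> \<le> (\<Sum>l'\<in>UNIV. \<bar>\<alpha> l'\<bar> * ?gG)"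
    proof (rule sum_mono)
      fix l'
      let ?F = "{l\<in>?I. rk l' = rk l \<and> l' \<noteq> l}"
      have "(\<Sum>l\<in>?I. if rk l' = rk l \<and> l' \<noteq> l then \<bar>\<alpha> l'\<bar> * ?gG else 0) = real (card ?F) * (\<bar>\<alpha> l'\<bar> * ?gG)"
        using finI by (simp add: sum.inter_filter[symmetric])
      also have "\<forall>x\<in>?F. \<forall>y\<in>?F. x = y" using injI by (auto dest: inj_onD)
      then have "card ?F \<le> Suc 0" using finI by (subst card_le_Suc0_iff_eq) auto
      then have "card ?F \<le> 1" by simp
      then have "real (card ?F) * (\<bar>\<alpha> l'\<bar> * ?gG) \<le> 1 * (\<bar>\<alpha> l'\<bar> * ?gG)"
        using gG0 by (intro mult_right_mono) auto
      finally show "(\<Sum>l\<in>?I. if rk l' = rk l \<and> l' \<noteq> l then \<bar>\<alpha> l'\<bar> * ?gG else 0) \<le> \<bar>\<alpha> l'\<bar> * ?gG"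
        by simp
    qed
    finally show ?thesis unfolding L_def by (simp add: sum_distrib_left sum_distrib_right mult.commute)
  qed
  have B2s: "(L2_set b ?I)\<^sup>2 \<le> ?gG\<^sup>2 * L\<^sup>2"
  proof -
    have "L2_set b ?I \<le> ?gG * L" using L2_set_le_sum_abs[of b ?I] B1 by linarith
    then have "(L2_set b ?I)\<^sup>2 \<le> (?gG * L)\<^sup>2" by (intro power_mono) auto
    then show ?thesis by (simp add: power_mult_distrib)
  qed
  have cardI: "real (card ?I) \<le> real (tstar p G)"
    unfolding tstar_def using j by (auto intro!: Max_ge)
  have gn: "(real (card ?I) - 1) * ?gT \<le> \<nu>"
  proof -
    have "(real (card ?I) - 1) * ?gT \<le> real (tstar p G) * ?gT" using cardI gT0 by (intro mult_right_mono) auto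
    also have "\<dots> \<le> \<nu>" using A2' gG0 unfolding tau_star_def by linarith
    finally show ?thesis .
  qed
  have N2s: "(L2_set N ?I)\<^sup>2 \<le> (1 + \<nu>) * (norm (orth_proj (span (X ` ?I)) W))\<^sup>2"
  proof -
    have "(L2_set N ?I)\<^sup>2 = (\<Sum>l\<in>?I. (W \<bullet> X l)\<^sup>2)" unfolding L2_set_def N_def by (simp add: sum_nonneg)
    also have "\<dots> \<le> (1 + \<nu>) * (norm (orth_proj (span (X ` ?I)) W))\<^sup>2"
    proof (rule noise_bound[OF A2 _ gT0 gn])
      fix l l' assume "l \<in> ?I" "l' \<in> ?I" "l \<noteq> l'"
      then have "rk l \<noteq> rk l'" using injI by (auto dest: inj_onD)
      then show "\<bar>Gram X l l'\<bar> \<le> ?gT" by (rule gBT_le)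
    qed (use nu in simp)
    finally show ?thesis .
  qed
  let ?D = "L2_set (\<lambda>l. Rstat X \<alpha> W l - \<alpha> l) ?I"
  have tri: "\<bar>norm2_on ?I (Rstat X \<alpha> W) - norm2_on ?I \<alpha>\<bar> \<le> ?D"
  proof -
    have e1: "L2_set (Rstat X \<alpha> W) ?I \<le> ?D + L2_set \<alpha> ?I"
      using L2_set_triangle_ineq[of "\<lambda>l. Rstat X \<alpha> W l - \<alpha> l" \<alpha> ?I] by simp
    have "L2_set \<alpha> ?I \<le> L2_set (\<lambda>l. \<alpha> l - Rstat X \<alpha> W l) ?I + L2_set (Rstat X \<alpha> W) ?I"
      using L2_set_triangle_ineq[of "\<lambda>l. \<alpha> l - Rstat X \<alpha> W l" "Rstat X \<alpha> W" ?I] by simp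
    also have "L2_set (\<lambda>l. \<alpha> l - Rstat X \<alpha> W l) ?I = ?D"
      unfolding L2_set_def by (simp add: power2_commute)
    finally show ?thesis using e1 unfolding norm2_L2 by linarith
  qed
  have D: "?D \<le> L2_set a ?I + L2_set b ?I + L2_set N ?I"
  proof -
    have "?D = L2_set (\<lambda>l. (a l + b l) + N l) ?I" unfolding Rs ..
    also have "\<dots> \<le> L2_set (\<lambda>l. a l + b l) ?I + L2_set N ?I" by (rule L2_set_triangle_ineq)
    also have "L2_set (\<lambda>l. a l + b l) ?I \<le> L2_set a ?I + L2_set b ?I" by (rule L2_set_triangle_ineq)
    finally show ?thesis by simp
  qed
  define A where "A = L2_set a ?I"
  define B where "B = L2_set b ?I"
  define C where "C = L2_set N ?I"
  have "\<bar>norm2_on ?I (Rstat X \<alpha> W) - norm2_on ?I \<alpha>\<bar>\<^sup>2 \<le> (A + B + C)\<^sup>2"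
    using tri D unfolding A_def B_def C_def by (intro power_mono) auto
  also have "\<dots> \<le> 4 * A\<^sup>2 + 4 * B\<^sup>2 + 2 * C\<^sup>2"
  proof -
    have "0 \<le> (A - B)\<^sup>2" "0 \<le> (A + B - C)\<^sup>2" by simp_all
    then show ?thesis by (simp add: power2_eq_square algebra_simps)
  qed
  also have "\<dots> \<le> 4 * (real (card ?I) * ?gT\<^sup>2 * L\<^sup>2) + 4 * (?gG\<^sup>2 * L\<^sup>2)
      + 2 * ((1 + \<nu>) * (norm (orth_proj (span (X ` ?I)) W))\<^sup>2)"
    using A2s B2s N2s unfolding A_def B_def C_def by linarith
  also have "\<dots> = 4 * L\<^sup>2 * (real (card ?I) * ?gT\<^sup>2 + ?gG\<^sup>2)
      + 2 * (1 + \<nu>) * (norm (orth_proj (span (X ` ?I)) W))\<^sup>2" by (simp add: algebra_simps)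
  also have "\<dots> \<le> 4 * (M\<^sup>2 * v) * (real (card ?I) * ?gT\<^sup>2 + ?gG\<^sup>2)
      + 2 * (1 + \<nu>) * (norm (orth_proj (span (X ` ?I)) W))\<^sup>2"
    using L2 by (intro add_right_mono mult_right_mono) (auto intro!: add_nonneg_nonneg)
  also have "real (card ?I) * ?gT\<^sup>2 + ?gG\<^sup>2 = rfun X p G rk ?I"
  proof -
    have "{j'. \<exists>l\<in>?I. grp p G l = j'} = {j}"
      using Ine grp_eq[OF part j] by auto
    then show ?thesis unfolding rfun_def by simp
  qed
  finally show ?thesis by (simp add: mult.assoc)
qed

end
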